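(* Let $\mathscr V\subset\mathbb{R}_{\max}^n$ be a max-plus cone with full support. If $\mathscr V$ is contained in a half-space $\mathscr H$, then there exists a half-space $\mathscr H'$ such that $\mathscr V\subset\mathscr H'\subset\mathscr H$ and $\mathscr H'$ is minimal for inclusion among half-spaces containing $\mathscr V$ (i.e. there is no half-space $\mathscr H''$ with $\mathscr V\subset\mathscr H''\subsetneq\mathscr H'$).
   Context: $\mathbb{R}_{\max}=\mathbb{R}\cup\{-\infty\}$ with $a\oplus b=\max(a,b)$, $ab=a+b$. A max-plus cone is a set $\mathscr V\subset\mathbb{R}_{\max}^n$ with $\lambda u\oplus\mu v\in\mathscr V$ for all $u,v\in\mathscr V$, $\lambda,\mu\in\mathbb{R}_{\max}$ (entrywise operations). A half-space of $\mathbb{R}_{\max}^n$ is a set $\{x:\bigoplus_{i=1}^n a_ix_i\le\bigoplus_{j=1}^n b_jx_j\}$ with $a,b\in\mathbb{R}_{\max}^n$. $\mathscr V$ has full support if for every $k\in\{1,\dots,n\}$ some $v\in\mathscr V$ has $v_k\neq-\infty$. *)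

theory Defs
  imports "HOL-Library.Extended_Real"
begin

text \<open>R_max = R \<union> {-\<infinity>} is modelled as the ereals different from +\<infinity>;
  max-plus sum is max, max-plus product is (+) (note -\<infinity> + a = -\<infinity>).
  Vectors of R_max^n are functions from a finite index type 'n (with n = CARD('n))
  into R_max.\<close>

definition Rmax :: "ereal set" where
  "Rmax = {x. x \<noteq> \<infinity>}"

definition Rmax_vecs :: "('n::finite \<Rightarrow> ereal) set" where
  "Rmax_vecs = {x. \<forall>i. x i \<in> Rmax}"

definition maxplus_cone :: "('n::finite \<Rightarrow> ereal) set \<Rightarrow> bool" where
  "maxplus_cone V \<longleftrightarrow> V \<subseteq> Rmax_vecs \<and>
     (\<forall>u\<in>V. \<forall>v\<in>V. \<forall>l\<in>Rmax. \<forall>m\<in>Rmax. (\<lambda>i. max (l + u i) (m + v i)) \<in> V)"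

definition halfspace_of :: "('n::finite \<Rightarrow> ereal) \<Rightarrow> ('n \<Rightarrow> ereal) \<Rightarrow> ('n \<Rightarrow> ereal) set" where
  "halfspace_of a b = {x \<in> Rmax_vecs. (SUP i. a i + x i) \<le> (SUP j. b j + x j)}"

definition halfspace :: "('n::finite \<Rightarrow> ereal) set \<Rightarrow> bool" where
  "halfspace H \<longleftrightarrow> (\<exists>a\<in>Rmax_vecs. \<exists>b\<in>Rmax_vecs. H = halfspace_of a b)"

definition full_support :: "('n::finite \<Rightarrow> ereal) set \<Rightarrow> bool" where
  "full_support V \<longleftrightarrow> (\<forall>k. \<exists>v\<in>V. v k \<noteq> -\<infinity>)"

end

theory Submission imports Defs begin

lemma sup_attained:
  fixes g :: "'n::finite \<Rightarrow> ereal"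
  shows "\<exists>j. (SUP i. g i) = g j"
proof -
  have "Max (range g) = Sup (range g)" by (rule Max_Sup) auto
  moreover have "Max (range g) \<in> range g" by (rule Max_in) auto
  ultimately show ?thesis by auto
qed

lemma sup_le_sup_iff:
  fixes f g :: "'n::finite \<Rightarrow> ereal"
  shows "(SUP i. f i) \<le> (SUP j. g j) \<longleftrightarrow> (\<forall>i. \<exists>j. f i \<le> g j)"
proof
  assume h: "(SUP i. f i) \<le> (SUP j. g j)"
  obtain j where j: "(SUP i. g i) = g j" using sup_attained by blast
  show "\<forall>i. \<exists>j. f i \<le> g j"
    using h j by (metis SUP_upper UNIV_I order_trans)
next
  assume "\<forall>i. \<exists>j. f i \<le> g j"
  then show "(SUP i. f i) \<le> (SUP j. g j)"
    by (meson SUP_least SUP_upper2 UNIV_I)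
qed

lemma mem_hs:
  "x \<in> halfspace_of a b \<longleftrightarrow> x \<in> Rmax_vecs \<and> (\<forall>i. \<exists>j. a i + x i \<le> b j + x j)"
  unfolding halfspace_of_def by (simp add: sup_le_sup_iff)

lemma hs_sub: "halfspace_of a b \<subseteq> Rmax_vecs"
  unfolding halfspace_of_def by auto

lemma rmax_iff: "x \<in> Rmax_vecs \<longleftrightarrow> (\<forall>i. x i \<noteq> \<infinity>)"
  unfolding Rmax_vecs_def Rmax_def by auto

lemma hs_scale:
  fixes c d :: "'n::finite \<Rightarrow> ereal"
  shows "halfspace_of (\<lambda>k. c k + ereal t) (\<lambda>k. d k + ereal t) = halfspace_of c d"
proof -
  have "c k + ereal t + x k \<le> d l + ereal t + x l \<longleftrightarrow> c k + x k \<le> d l + x l" for k l x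
    by (cases "c k"; cases "x k"; cases "d l"; cases "x l") auto
  then show ?thesis unfolding mem_hs by (auto simp: mem_hs)
qed

definition nf :: "('n::finite \<Rightarrow> ereal) \<Rightarrow> ('n \<Rightarrow> ereal) \<Rightarrow> bool" where
  "nf c d \<longleftrightarrow> (\<forall>k. c k = -\<infinity> \<or> d k = -\<infinity>)"

lemma normal_form:
  fixes a b :: "'n::finite \<Rightarrow> ereal"
  assumes "a \<in> Rmax_vecs" "b \<in> Rmax_vecs"
  shows "\<exists>a' b'. a' \<in> Rmax_vecs \<and> b' \<in> Rmax_vecs \<and> nf a' b' \<and> halfspace_of a' b' = halfspace_of a b"
proof -
  define a' where "a' = (\<lambda>k. if a k \<le> b k then -\<infinity> else a k)"
  define b' where "b' = (\<lambda>k. if a k \<le> b k then b k else -\<infinity>)"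
  have r: "a' \<in> Rmax_vecs" "b' \<in> Rmax_vecs" using assms by (auto simp: rmax_iff a'_def b'_def)
  have n: "nf a' b'" by (auto simp: nf_def a'_def b'_def)
  have "halfspace_of a' b' = halfspace_of a b"
  proof (intro set_eqI iffI)
    fix x assume x: "x \<in> halfspace_of a b"
    then have xr: "x \<in> Rmax_vecs" and h: "\<forall>i. \<exists>j. a i + x i \<le> b j + x j" by (auto simp: mem_hs)
    obtain j0 where j0: "(SUP j. b j + x j) = b j0 + x j0" using sup_attained by blast
    have ub: "b j + x j \<le> b j0 + x j0" for j by (metis j0 SUP_upper UNIV_I)
    have a'le: "a' k \<le> a k" for k by (simp add: a'_def)
    show "x \<in> halfspace_of a' b'" unfolding mem_hs
    proof (intro conjI allI xr)
      fix i
      show "\<exists>j. a' i + x i \<le> b' j + x j"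
      proof (cases "b j0 + x j0 = -\<infinity>")
        case True
        obtain j where "a i + x i \<le> b j + x j" using h by blast
        then have "a i + x i \<le> -\<infinity>" using ub[of j] True by (metis order_trans)
        then have "a i + x i = -\<infinity>" by simp
        then have eq: "a' i + x i = -\<infinity>" using a'le[of i]
          by (metis add_right_mono ereal_infty_less_eq(2))
        have "a' i + x i \<le> b' i + x i" by (simp only: eq) simp
        then show ?thesis by blast
      next
        case False
        have xf: "x j0 \<noteq> -\<infinity>" "x j0 \<noteq> \<infinity>" "b j0 \<noteq> -\<infinity>" "b j0 \<noteq> \<infinity>"
          using False xr assms(2) by (auto simp: rmax_iff)
        have "a j0 \<le> b j0"
        proof (rule ccontr)
          assume "\<not> a j0 \<le> b j0"
          then have "b j0 + x j0 < a j0 + x j0" using xf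
            by (cases "a j0"; cases "b j0"; cases "x j0") auto
          moreover obtain j where "a j0 + x j0 \<le> b j + x j" using h by blast
          ultimately show False using ub[of j] by simp
        qed
        then have "b' j0 = b j0" by (simp add: b'_def)
        obtain j where "a i + x i \<le> b j + x j" using h by blast
        then have "a' i + x i \<le> b' j0 + x j0" using ub[of j] a'le[of i] \<open>b' j0 = b j0\<close>
          by (metis add_right_mono order_trans)
        then show ?thesis by blast
      qed
    qed
  next
    fix x assume x: "x \<in> halfspace_of a' b'"
    then have xr: "x \<in> Rmax_vecs" and h: "\<forall>i. \<exists>j. a' i + x i \<le> b' j + x j" by (auto simp: mem_hs)
    show "x \<in> halfspace_of a b" unfolding mem_hs
    proof (intro conjI allI xr)
      fix i
      show "\<exists>j. a i + x i \<le> b j + x j"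
      proof (cases "a i \<le> b i")
        case True then show ?thesis by (intro exI[of _ i]) (simp add: add_right_mono)
      next
        case False
        then obtain j where "a i + x i \<le> b' j + x j" using h[rule_format, of i] False by (auto simp: a'_def)
        moreover have "b' j \<le> b j" by (simp add: b'_def)
        ultimately show ?thesis by (meson add_right_mono order_trans)
      qed
    qed
  qed
  with r n show ?thesis by blast
qed

lemma hs_mono:
  assumes "\<And>k. a k \<le> c k" "\<And>k. d k \<le> b k"
  shows "halfspace_of c d \<subseteq> halfspace_of a b"
proof
  fix x assume "x \<in> halfspace_of c d"
  then have xr: "x \<in> Rmax_vecs" and h: "\<forall>i. \<exists>j. c i + x i \<le> d j + x j" by (auto simp: mem_hs)
  have "\<exists>j. a i + x i \<le> b j + x j" for i
  proof -
    obtain j where "c i + x i \<le> d j + x j" using h by blast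
    then show ?thesis using assms[of i] assms(2)[of j]
      by (meson add_right_mono order_trans)
  qed
  then show "x \<in> halfspace_of a b" using xr by (simp add: mem_hs)
qed

lemma sup_less_shift:
  fixes f :: "'a \<Rightarrow> ereal"
  assumes "y < (SUP p\<in>C. f p) + ereal r"
  shows "\<exists>p\<in>C. y < f p + ereal r"
proof (cases y)
  case (real m)
  then have "ereal (m - r) < (SUP p\<in>C. f p)" using assms
    by (cases "(SUP p\<in>C. f p)") auto
  then obtain p where "p \<in> C" "ereal (m - r) < f p" by (auto simp: less_SUP_iff)
  then show ?thesis using real by (intro bexI[of _ p]) (cases "f p"; auto)
next
  case PInf then show ?thesis using assms by simp
next
  case MInf
  then have "-\<infinity> < (SUP p\<in>C. f p)" using assms by (cases "(SUP p\<in>C. f p)") auto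
  then obtain p where "p \<in> C" "-\<infinity> < f p" by (auto simp: less_SUP_iff)
  then show ?thesis using MInf by (intro bexI[of _ p]) (cases "f p"; auto)
qed

lemma inf_less_shift:
  fixes f :: "'a \<Rightarrow> ereal"
  assumes "(INF p\<in>C. f p) + ereal r < y"
  shows "\<exists>p\<in>C. f p + ereal r < y"
proof (cases y)
  case (real m)
  then have "(INF p\<in>C. f p) < ereal (m - r)" using assms
    by (cases "(INF p\<in>C. f p)") auto
  then obtain p where "p \<in> C" "f p < ereal (m - r)" by (auto simp: INF_less_iff)
  then show ?thesis using real by (intro bexI[of _ p]) (cases "f p"; auto)
next
  case MInf then show ?thesis using assms by simp
next
  case PInf
  then have "(INF p\<in>C. f p) < \<infinity>" using assms by (cases "(INF p\<in>C. f p)") auto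
  then obtain p where "p \<in> C" "f p < \<infinity>" by (metis INF_less_iff)
  then show ?thesis using PInf by (intro bexI[of _ p]) (cases "f p"; auto)
qed

lemma coord_bound:
  fixes v b :: "'n::finite \<Rightarrow> ereal"
  assumes "v \<in> Rmax_vecs" "v k \<noteq> -\<infinity>" "b \<in> Rmax_vecs"
  shows "\<exists>r. \<forall>c d. (\<forall>j. d j \<le> b j) \<longrightarrow> v \<in> halfspace_of c d \<longrightarrow> c k \<le> ereal r"
proof -
  obtain j0 where j0: "(SUP j. b j + v j) = b j0 + v j0" using sup_attained by blast
  define B where "B = real_of_ereal (b j0 + v j0)"
  have Bub: "b j + v j \<le> ereal B" for j
  proof -
    have "b j + v j \<le> b j0 + v j0" by (metis j0 SUP_upper UNIV_I)
    moreover have "b j0 + v j0 \<le> ereal B" using assms unfolding B_def rmax_iff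
      by (cases "b j0"; cases "v j0") auto
    ultimately show ?thesis by simp
  qed
  obtain rv where rv: "v k = ereal rv" using assms by (cases "v k") (auto simp: rmax_iff)
  show ?thesis
  proof (intro exI[of _ "B - rv"] allI impI)
    fix c d assume d: "\<forall>j. d j \<le> b j" and v: "v \<in> halfspace_of c d"
    then obtain j where "c k + v k \<le> d j + v j" by (auto simp: mem_hs)
    also have "\<dots> \<le> b j + v j" using d by (simp add: add_right_mono)
    also have "\<dots> \<le> ereal B" by (rule Bub)
    finally show "c k \<le> ereal (B - rv)" using rv by (cases "c k") auto
  qed
qed

definition le2 :: "('n \<Rightarrow> ereal) \<times> ('n \<Rightarrow> ereal) \<Rightarrow> ('n \<Rightarrow> ereal) \<times> ('n \<Rightarrow> ereal) \<Rightarrow> bool" where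
  "le2 p q \<longleftrightarrow> (\<forall>k. fst p k \<le> fst q k) \<and> (\<forall>k. snd q k \<le> snd p k)"

lemma le2_trans: "le2 p q \<Longrightarrow> le2 q r \<Longrightarrow> le2 p r"
  unfolding le2_def by (meson order_trans)

lemma le2_refl: "le2 p p" unfolding le2_def by auto

lemma chain_max:
  assumes "finite F" "F \<noteq> {}" "F \<subseteq> C" "\<forall>p\<in>C. \<forall>q\<in>C. le2 p q \<or> le2 q p"
  shows "\<exists>r\<in>C. \<forall>p\<in>F. le2 p r"
  using assms(1,2,3)
proof (induction F rule: finite_ne_induct)
  case (singleton x) then show ?case by (auto simp: le2_def)
next
  case (insert x F)
  then obtain r where r: "r \<in> C" "\<forall>p\<in>F. le2 p r" by auto
  have x: "x \<in> C" using insert by auto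
  show ?case
  proof (cases "le2 x r")
    case True then show ?thesis using r by auto
  next
    case False
    then have "le2 r x" using assms(4) r x by blast
    then have "\<forall>p\<in>insert x F. le2 p x" using r le2_refl le2_trans by blast
    then show ?thesis using x by blast
  qed
qed


definition Aset :: "('n::finite \<Rightarrow> ereal) set \<Rightarrow> ('n \<Rightarrow> ereal) \<Rightarrow> ('n \<Rightarrow> ereal) \<Rightarrow> (('n \<Rightarrow> ereal) \<times> ('n \<Rightarrow> ereal)) set" where
  "Aset V a b = {(c, d). c \<in> Rmax_vecs \<and> d \<in> Rmax_vecs \<and> nf c d \<and> (\<forall>k. a k \<le> c k) \<and> (\<forall>k. d k \<le> b k) \<and> V \<subseteq> halfspace_of c d}"

lemma chain_ub:
  fixes V :: "('n::finite \<Rightarrow> ereal) set"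
  assumes fs: "full_support V" and VR: "V \<subseteq> Rmax_vecs" and bR: "b \<in> Rmax_vecs"
    and C: "C \<subseteq> Aset V a b" "C \<noteq> {}" and ch: "\<forall>p\<in>C. \<forall>q\<in>C. le2 p q \<or> le2 q p"
  shows "\<exists>u\<in>Aset V a b. \<forall>p\<in>C. le2 p u"
proof -
  define S where "S = (\<lambda>k. SUP p\<in>C. fst p k)"
  define I where "I = (\<lambda>k. INF p\<in>C. snd p k)"
  have pA: "fst p \<in> Rmax_vecs" "snd p \<in> Rmax_vecs" "nf (fst p) (snd p)" "\<forall>k. a k \<le> fst p k"
     "\<forall>k. snd p k \<le> b k" "V \<subseteq> halfspace_of (fst p) (snd p)" if "p \<in> C" for p
  proof -
    have "p \<in> Aset V a b" using that C(1) by blast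
    then show "fst p \<in> Rmax_vecs" "snd p \<in> Rmax_vecs" "nf (fst p) (snd p)" "\<forall>k. a k \<le> fst p k"
     "\<forall>k. snd p k \<le> b k" "V \<subseteq> halfspace_of (fst p) (snd p)"
      by (cases p; auto simp: Aset_def)+
  qed
  obtain p0 where p0: "p0 \<in> C" using C(2) by blast
  have Sfin: "S k \<noteq> \<infinity>" for k
  proof -
    obtain v where v: "v \<in> V" "v k \<noteq> -\<infinity>" using fs by (auto simp: full_support_def)
    obtain r where r: "\<forall>c d. (\<forall>j. d j \<le> b j) \<longrightarrow> v \<in> halfspace_of c d \<longrightarrow> c k \<le> ereal r"
      using coord_bound[of v k b] v VR bR by auto
    have "fst p k \<le> ereal r" if "p \<in> C" for p using r pA[OF that] v(1) by blast
    then have "S k \<le> ereal r" unfolding S_def by (rule SUP_least)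
    then show ?thesis by auto
  qed
  have Ifin: "I k \<noteq> \<infinity>" for k
  proof -
    have "I k \<le> snd p0 k" unfolding I_def using p0 by (rule INF_lower)
    also have "\<dots> \<le> b k" using pA(5)[OF p0] by blast
    finally show ?thesis using bR by (auto simp: rmax_iff)
  qed
  have nfu: "nf S I"
    unfolding nf_def
  proof
    fix k
    show "S k = -\<infinity> \<or> I k = -\<infinity>"
    proof (cases "\<exists>p\<in>C. fst p k \<noteq> -\<infinity>")
      case True
      then obtain p where p: "p \<in> C" "fst p k \<noteq> -\<infinity>" by blast
      then have "snd p k = -\<infinity>" using pA(3)[OF p(1)] by (auto simp: nf_def)
      moreover have "I k \<le> snd p k" unfolding I_def using p(1) by (rule INF_lower)
      ultimately show ?thesis by simp
    next
      case False
      then have "S k \<le> -\<infinity>" unfolding S_def by (intro SUP_least) auto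
      then show ?thesis by simp
    qed
  qed
  have aS: "a k \<le> S k" for k
    using pA(4)[OF p0] p0 unfolding S_def by (meson SUP_upper order_trans)
  have Ib: "I k \<le> b k" for k
    using pA(5)[OF p0] p0 unfolding I_def by (meson INF_lower order_trans)
  have VH: "V \<subseteq> halfspace_of S I"
  proof
    fix x assume xV: "x \<in> V"
    then have xr: "x \<in> Rmax_vecs" using VR by blast
    have "\<exists>j. S i + x i \<le> I j + x j" for i
    proof (rule ccontr)
      assume "\<not> (\<exists>j. S i + x i \<le> I j + x j)"
      then have lt: "\<forall>j. I j + x j < S i + x i" by (simp add: not_le)
      define T where "T = S i + x i"
      have "I undefined + x undefined < T" using lt unfolding T_def by blast
      then have Tn: "T \<noteq> -\<infinity>" by auto
      have xi: "x i \<noteq> -\<infinity>" "x i \<noteq> \<infinity>" using Tn xr Sfin[of i] unfolding T_def by (auto simp: rmax_iff)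
      have ex: "\<exists>p. p \<in> C \<and> snd p j + x j < T" for j
      proof (cases "x j = -\<infinity>")
        case True then show ?thesis using p0 Tn pA(2)[OF p0]
          by (intro exI[of _ p0]) (cases "snd p0 j"; cases T; auto simp: rmax_iff)
      next
        case False
        then obtain r where r: "x j = ereal r" using xr by (cases "x j") (auto simp: rmax_iff)
        have "I j + x j < T" using lt unfolding T_def by blast
        then have "(INF p\<in>C. snd p j) + ereal r < T" by (simp only: r I_def)
        from inf_less_shift[OF this] obtain p where "p \<in> C" "snd p j + ereal r < T" by blast
        then show ?thesis by (intro exI[of _ p]) (simp only: r)
      qed
      obtain pj where pj: "\<forall>j. pj j \<in> C \<and> snd (pj j) j + x j < T"
        using choice[of "\<lambda>j p. p \<in> C \<and> snd p j + x j < T"] ex by blast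
      obtain j1 where j1: "(SUP j. snd (pj j) j + x j) = snd (pj j1) j1 + x j1"
        using sup_attained[of "\<lambda>j. snd (pj j) j + x j"] by blast
      define Tm where "Tm = snd (pj j1) j1 + x j1"
      have Tmub: "snd (pj j) j + x j \<le> Tm" for j
        unfolding Tm_def j1[symmetric] by (rule SUP_upper) simp
      obtain ri where ri: "x i = ereal ri" using xi by (cases "x i") auto
      have "Tm < T" using pj unfolding Tm_def by blast
      then have "Tm < (SUP p\<in>C. fst p i) + ereal ri" unfolding T_def S_def ri by simp
      from sup_less_shift[OF this] obtain q where q: "q \<in> C" "Tm < fst q i + ereal ri" by blast
      note q = q(1) q(2)[folded ri]
      have fin: "finite (insert q (range pj))" by simp
      have sub: "insert q (range pj) \<subseteq> C" using q(1) pj by auto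
      obtain r where r: "r \<in> C" "\<forall>p\<in>insert q (range pj). le2 p r"
        using chain_max[OF fin _ sub ch] by blast
      have "x \<in> halfspace_of (fst r) (snd r)" using pA(6)[OF r(1)] xV by blast
      then obtain j where j: "fst r i + x i \<le> snd r j + x j" unfolding mem_hs by blast
      have "le2 q r" using r(2) by blast
      then have "fst q i + x i \<le> fst r i + x i" by (simp add: le2_def add_right_mono)
      also have "\<dots> \<le> snd r j + x j" by (rule j)
      also have "\<dots> \<le> snd (pj j) j + x j"
      proof -
        have "le2 (pj j) r" using r(2) by blast
        then show ?thesis by (simp add: le2_def add_right_mono)
      qed
      also have "\<dots> \<le> Tm" by (rule Tmub)
      finally show False using q(2) by simp
    qed
    then show "x \<in> halfspace_of S I" using xr by (simp add: mem_hs)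
  qed
  have "(S, I) \<in> Aset V a b" unfolding Aset_def using Sfin Ifin nfu aS Ib VH by (simp add: rmax_iff)
  moreover have "\<forall>p\<in>C. le2 p (S, I)"
    unfolding le2_def S_def I_def by (auto intro: SUP_upper INF_lower)
  ultimately show ?thesis by blast
qed


lemma partial_le2: "partial_order_on A (relation_of le2 A)"
  unfolding partial_order_on_def preorder_on_def refl_on_def trans_def antisym_def relation_of_def
  by (auto simp: le2_def prod_eq_iff fun_eq_iff intro: order_trans order.antisym)

lemma unit_not_in:
  fixes c d :: "'n::finite \<Rightarrow> ereal"
  assumes "nf c d" "c i \<noteq> -\<infinity>" "d \<in> Rmax_vecs"
  shows "(\<lambda>k. if k = i then 0 else -\<infinity>) \<notin> halfspace_of c d"
proof
  assume "(\<lambda>k. if k = i then 0 else -\<infinity>) \<in> halfspace_of c d"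
  then have "\<exists>l. c i + (if i = i then 0 else -\<infinity>) \<le> d l + (if l = i then 0 else -\<infinity>)"
    unfolding mem_hs by blast
  then obtain l where l: "c i \<le> d l + (if l = i then 0 else -\<infinity>)" by auto
  have di: "d i = -\<infinity>" using assms by (auto simp: nf_def)
  have dl: "d l \<noteq> \<infinity>" using assms(3) by (auto simp: rmax_iff)
  show False
  proof (cases "l = i")
    case True then show ?thesis using l di assms(2) by simp
  next
    case False
    then have "c i \<le> d l + -\<infinity>" using l by simp
    also have "d l + -\<infinity> = -\<infinity>" using dl by (cases "d l") auto
    finally show ?thesis using assms(2) by simp
  qed
qed

lemma unit_in:
  fixes c d :: "'n::finite \<Rightarrow> ereal"
  assumes "c i = -\<infinity>" "c \<in> Rmax_vecs" "d \<in> Rmax_vecs"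
  shows "(\<lambda>k. if k = i then 0 else -\<infinity>) \<in> halfspace_of c d"
  unfolding mem_hs
proof (intro conjI allI)
  show "(\<lambda>k. if k = i then 0 else -\<infinity>) \<in> Rmax_vecs" by (simp add: rmax_iff)
  fix k
  have eq: "c k + (if k = i then 0 else -\<infinity>) = -\<infinity>"
    using assms(1,2) by (cases "k = i") (auto simp: rmax_iff)
  have "c k + (if k = i then 0 else -\<infinity>) \<le> d k + (if k = i then 0 else - \<infinity>)"
    unfolding eq by simp
  then show "\<exists>j. c k + (if k = i then 0 else -\<infinity>) \<le> d j + (if j = i then 0 else - \<infinity>)"
    by blast
qed

lemma key_ineq:
  fixes c d c'' d'' :: "'n::finite \<Rightarrow> ereal"
  assumes R: "c \<in> Rmax_vecs" "d \<in> Rmax_vecs" "c'' \<in> Rmax_vecs" "d'' \<in> Rmax_vecs"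
    and N: "nf c d" "nf c'' d''"
    and sub: "halfspace_of c'' d'' \<subseteq> halfspace_of c d"
    and ci: "c i \<noteq> -\<infinity>" and ci'': "c'' i \<noteq> -\<infinity>" and dj: "d'' j \<noteq> -\<infinity>"
  shows "d j \<noteq> -\<infinity> \<and> real_of_ereal (c i) - real_of_ereal (c'' i) \<le> real_of_ereal (d j) - real_of_ereal (d'' j)"
proof -
  have ij: "i \<noteq> j" using N(2) ci'' dj by (auto simp: nf_def)
  have cj'': "c'' j = -\<infinity>" using N(2) dj by (auto simp: nf_def)
  have di: "d i = -\<infinity>" using N(1) ci by (auto simp: nf_def)
  obtain x where x: "c'' i = ereal x" using ci'' R(3) by (cases "c'' i") (auto simp: rmax_iff)
  obtain y where y: "d'' j = ereal y" using dj R(4) by (cases "d'' j") (auto simp: rmax_iff)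
  obtain z where z: "c i = ereal z" using ci R(1) by (cases "c i") (auto simp: rmax_iff)
  define w where "w = (\<lambda>k. if k = j then 0 else if k = i then ereal (y - x) else -\<infinity>)"
  have wR: "w \<in> Rmax_vecs" by (simp add: w_def rmax_iff)
  have "w \<in> halfspace_of c'' d''"
    unfolding mem_hs
  proof (intro conjI allI wR)
    fix k
    show "\<exists>l. c'' k + w k \<le> d'' l + w l"
    proof (cases "k = j")
      case True
      then show ?thesis using cj'' ij by (intro exI[of _ j]) (simp add: w_def)
    next
      case False
      show ?thesis
      proof (cases "k = i")
        case True
        then show ?thesis using ij x y by (intro exI[of _ j]) (simp add: w_def)
      next
        case False
        then have "w k = -\<infinity>" using \<open>k \<noteq> j\<close> by (simp add: w_def)
        moreover have "c'' k \<noteq> \<infinity>" using R(3) by (auto simp: rmax_iff)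
        ultimately have eq: "c'' k + w k = -\<infinity>" by (cases "c'' k") auto
        have "c'' k + w k \<le> d'' k + w k" unfolding eq by simp
        then show ?thesis by blast
      qed
    qed
  qed
  then have "w \<in> halfspace_of c d" using sub by blast
  then obtain l where l: "c i + w i \<le> d l + w l" unfolding mem_hs by blast
  have wi: "w i = ereal (y - x)" using ij by (simp add: w_def)
  have lhs: "c i + w i = ereal (z + y - x)" using z wi by simp
  have "l = j"
  proof (rule ccontr)
    assume "l \<noteq> j"
    then have "w l = -\<infinity> \<or> l = i" by (auto simp: w_def)
    moreover have "d l \<noteq> \<infinity>" using R(2) by (auto simp: rmax_iff)
    ultimately have eq: "d l + w l = -\<infinity>" using di wi by (cases "d l") auto
    have "c i + w i \<le> -\<infinity>" using l unfolding eq .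
    then show False using lhs by simp
  qed
  then have "ereal (z + y - x) \<le> d j" using l lhs by (simp add: w_def)
  moreover have "d j \<noteq> \<infinity>" using R(2) by (auto simp: rmax_iff)
  ultimately show ?thesis using x y z by (cases "d j") auto
qed


theorem theorem3p5:
  fixes V H :: "('n::finite \<Rightarrow> ereal) set"
  assumes "maxplus_cone V" and "full_support V"
    and "halfspace H" and "V \<subseteq> H"
  shows "\<exists>H'. halfspace H' \<and> V \<subseteq> H' \<and> H' \<subseteq> H \<and>
           \<not> (\<exists>H''. halfspace H'' \<and> V \<subseteq> H'' \<and> H'' \<subset> H')"
proof (cases "\<exists>H0. halfspace H0 \<and> V \<subseteq> H0 \<and> H0 \<subseteq> H \<and> H0 \<noteq> Rmax_vecs")
  case False
  have HR: "H = Rmax_vecs" using False assms(3,4) by blast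
  show ?thesis
  proof (intro exI[of _ H] conjI assms(3,4) order_refl notI)
    assume "\<exists>H''. halfspace H'' \<and> V \<subseteq> H'' \<and> H'' \<subset> H"
    then obtain H'' where "halfspace H''" "V \<subseteq> H''" "H'' \<subset> H" by blast
    then have "H'' = Rmax_vecs" using False by blast
    then show False using HR \<open>H'' \<subset> H\<close> by simp
  qed
next
  case True
  then obtain H0 where H0: "halfspace H0" "V \<subseteq> H0" "H0 \<subseteq> H" "H0 \<noteq> Rmax_vecs" by blast
  have VR: "V \<subseteq> Rmax_vecs" using assms(1) by (simp add: maxplus_cone_def)
  obtain a0 b0 where ab0: "a0 \<in> Rmax_vecs" "b0 \<in> Rmax_vecs" "H0 = halfspace_of a0 b0"
    using H0(1) by (auto simp: halfspace_def)
  obtain a b where ab: "a \<in> Rmax_vecs" "b \<in> Rmax_vecs" "nf a b" "halfspace_of a b = H0"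
    using normal_form[OF ab0(1,2)] ab0(3) by metis
  obtain i0 where i0: "a i0 \<noteq> -\<infinity>"
  proof (rule ccontr)
    assume "\<not> thesis"
    then have am: "a k = -\<infinity>" for k using that by blast
    have "halfspace_of a b = Rmax_vecs"
    proof (intro set_eqI iffI)
      fix x :: "'n \<Rightarrow> ereal" assume "x \<in> Rmax_vecs"
      moreover have "a k + x k \<le> b k + x k" for k
      proof -
        have eq: "a k + x k = -\<infinity>" using am[of k] \<open>x \<in> Rmax_vecs\<close> by (cases "x k") (auto simp: rmax_iff)
        show ?thesis unfolding eq by simp
      qed
      ultimately show "x \<in> halfspace_of a b" unfolding mem_hs by blast
    qed (use hs_sub in blast)
    then show False using ab(4) H0(4) by simp
  qed
  define A where "A = Aset V a b"
  have abA: "(a, b) \<in> A" unfolding A_def Aset_def using ab H0(2) by auto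
  have "\<exists>m\<in>A. \<forall>p\<in>A. le2 m p \<longrightarrow> p = m"
  proof (rule predicate_Zorn)
    show "partial_order_on A (relation_of le2 A)" by (rule partial_le2)
  next
    fix C assume C: "C \<in> Chains (relation_of le2 A)"
    have CA: "C \<subseteq> A" using Chains_relation_of[OF C] .
    have ch: "\<forall>p\<in>C. \<forall>q\<in>C. le2 p q \<or> le2 q p"
      using C unfolding Chains_def relation_of_def by blast
    show "\<exists>u\<in>A. \<forall>p\<in>C. le2 p u"
    proof (cases "C = {}")
      case True then show ?thesis using abA by blast
    next
      case False
      then show ?thesis using chain_ub[OF assms(2) VR ab(2) CA[unfolded A_def] False ch] A_def by blast
    qed
  qed
  then obtain c d where m: "(c, d) \<in> A" and mmax: "\<forall>p\<in>A. le2 (c, d) p \<longrightarrow> p = (c, d)" by auto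
  have cR: "c \<in> Rmax_vecs" and dR: "d \<in> Rmax_vecs" and nfm: "nf c d" and ac: "\<forall>k. a k \<le> c k"
    and db: "\<forall>k. d k \<le> b k" and Vm: "V \<subseteq> halfspace_of c d"
    using m by (auto simp: A_def Aset_def)
  show ?thesis
  proof (intro exI[of _ "halfspace_of c d"] conjI notI)
    show "halfspace (halfspace_of c d)" using cR dR by (auto simp: halfspace_def)
    show "V \<subseteq> halfspace_of c d" by (rule Vm)
    show "halfspace_of c d \<subseteq> H"
      using hs_mono[of a c d b] ac db ab(4) H0(3) by blast
  next
    assume "\<exists>H''. halfspace H'' \<and> V \<subseteq> H'' \<and> H'' \<subset> halfspace_of c d"
    then obtain H'' where H'': "halfspace H''" "V \<subseteq> H''" "H'' \<subset> halfspace_of c d" by blast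
    obtain c0 d0 where cd0: "c0 \<in> Rmax_vecs" "d0 \<in> Rmax_vecs" "H'' = halfspace_of c0 d0"
      using H''(1) by (auto simp: halfspace_def)
    obtain c'' d'' where cd: "c'' \<in> Rmax_vecs" "d'' \<in> Rmax_vecs" "nf c'' d''" "halfspace_of c'' d'' = H''"
      using normal_form[OF cd0(1,2)] cd0(3) by metis
    have sub: "halfspace_of c'' d'' \<subseteq> halfspace_of c d" using cd(4) H''(3) by blast
    have Ic: "c'' i \<noteq> -\<infinity>" if "c i \<noteq> -\<infinity>" for i
    proof
      assume "c'' i = -\<infinity>"
      then have "(\<lambda>k. if k = i then 0 else -\<infinity>) \<in> halfspace_of c'' d''"
        using unit_in cd by blast
      then show False using unit_not_in[OF nfm that dR] sub by blast
    qed
    define D where "D = (\<lambda>i. real_of_ereal (c i) - real_of_ereal (c'' i)) ` {i. c i \<noteq> -\<infinity>}"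
    have ci0: "c i0 \<noteq> -\<infinity>" using ac i0 by (metis ereal_infty_less_eq(2))
    have Dne: "D \<noteq> {}" "finite D" using ci0 by (auto simp: D_def)
    define lam where "lam = Max D"
    have lam_ge: "real_of_ereal (c i) - real_of_ereal (c'' i) \<le> lam" if "c i \<noteq> -\<infinity>" for i
      unfolding lam_def using Dne that by (intro Max_ge) (auto simp: D_def)
    obtain i1 where i1: "c i1 \<noteq> -\<infinity>" "lam = real_of_ereal (c i1) - real_of_ereal (c'' i1)"
      using Max_in[OF Dne(2) Dne(1)] unfolding lam_def D_def by auto
    define p where "p = ((\<lambda>k. c'' k + ereal lam), (\<lambda>k. d'' k + ereal lam))"
    have pR: "fst p \<in> Rmax_vecs" "snd p \<in> Rmax_vecs" using cd(1,2) by (auto simp: p_def rmax_iff)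
    have pnf: "nf (fst p) (snd p)" unfolding nf_def
    proof
      fix k
      show "fst p k = -\<infinity> \<or> snd p k = -\<infinity>"
        using cd(3) unfolding nf_def p_def by (cases "c'' k = -\<infinity>") auto
    qed
    have cp: "c k \<le> fst p k" for k
    proof (cases "c k = -\<infinity>")
      case True then show ?thesis by simp
    next
      case False
      have "c'' k \<noteq> -\<infinity>" by (rule Ic[OF False])
      with False cR cd(1) lam_ge[OF False] show ?thesis
        by (cases "c k"; cases "c'' k") (auto simp: p_def rmax_iff)
    qed
    have dp: "snd p k \<le> d k" for k
    proof (cases "d'' k = -\<infinity>")
      case True then show ?thesis by (simp add: p_def)
    next
      case False
      have ki: "d k \<noteq> -\<infinity> \<and> real_of_ereal (c i1) - real_of_ereal (c'' i1) \<le> real_of_ereal (d k) - real_of_ereal (d'' k)"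
        by (rule key_ineq[OF cR dR cd(1,2) nfm cd(3) sub i1(1) Ic[OF i1(1)] False])
      with False dR cd(2) i1(2) show ?thesis
        by (cases "d k"; cases "d'' k") (auto simp: p_def rmax_iff)
    qed
    have Vp: "V \<subseteq> halfspace_of (fst p) (snd p)"
      using hs_scale[of c'' lam d''] cd(4) H''(2) by (simp add: p_def)
    have "p \<in> A" unfolding A_def Aset_def
      using pR pnf Vp cp dp ac db by (cases p) (auto intro: order_trans dual_order.trans)
    moreover have "le2 (c, d) p" using cp dp by (simp add: le2_def)
    ultimately have "p = (c, d)" using mmax by blast
    then have "halfspace_of c d = H''"
      using hs_scale[of c'' lam d''] cd(4) by (simp add: p_def)
    then show False using H''(3) by simp
  qed
qed

end
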